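(* Let $\Delta=\Delta_1+\cdots+\Delta_r$ be a centered nef-partition of a reflexive polytope $\Delta\subseteq M_{\mathbb R}$, with dual nef-partition $\nabla_1,\dots,\nabla_r$, and let $\nabla=\nabla_1+\cdots+\nabla_r$. Then $\mathrm{Conv}(\Delta_1,\dots,\Delta_r)$ is a reflexive polytope equal to $\nabla^*$, and $\mathrm{Conv}(\nabla_1,\dots,\nabla_r)=\Delta^*$. Moreover, the Cayley polytope $\Delta_1*\cdots*\Delta_r$ (with respect to the affine lattice $M\times(\mathrm{aff}(e_1,\dots,e_r)\cap\mathbb Z^r)$) and $\mathrm{Conv}(\Delta_1,\dots,\Delta_r)$ (with respect to $M$) have the same $h^*$-polynomial.
   Context: $M\cong\mathbb Z^d$, $N$ dual lattice, pairing $\langle\cdot,\cdot\rangle$. For a lattice polytope $Q$ with $0$ in its interior, $Q^*=\{y:\langle x,y\rangle\ge-1\ \forall x\in Q\}$; $Q$ is reflexive if $Q^*$ is a lattice polytope. A centered nef-partition of a reflexive $\Delta$ is a decomposition $\Delta=\Delta_1+\cdots+\Delta_r$ into lattice polytopes with $0\in\Delta_i$ for all $i$; the dual nef-partition is $\nabla_i:=\{y\in N_{\mathbb R}:\langle x,y\rangle\ge-\delta_{ij}\ \forall x\in\Delta_j,\ \forall j\}$. With $e_1,\dots,e_r$ the standard basis of $\mathbb Z^r$, $\Delta_1*\cdots*\Delta_r=\mathrm{Conv}(\Delta_1\times e_1,\dots,\Delta_r\times e_r)$. For a $k$-dimensional lattice polytope $Q$ (in a given affine lattice), $h^*_Q(t)=(1-t)^{k+1}\sum_{j\ge0}\#(jQ\cap\text{lattice})t^j$.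 *)

theory Defs
  imports "HOL-Analysis.Analysis" "HOL-Computational_Algebra.Formal_Power_Series"
begin

text \<open>The lattice M (and N) is the integer lattice w.r.t. the standard basis of a
Euclidean space; the pairing between M and N is the inner product.\<close>
definition lattice_points :: "'a::euclidean_space set" where
  "lattice_points = {x. \<forall>b\<in>Basis. x \<bullet> b \<in> \<int>}"

definition lattice_polytope :: "'a::euclidean_space set \<Rightarrow> bool" where
  "lattice_polytope P \<longleftrightarrow> (\<exists>S. finite S \<and> S \<subseteq> lattice_points \<and> P = convex hull S)"

definition dual_polytope :: "'a::euclidean_space set \<Rightarrow> 'a set" where
  "dual_polytope Q = {y. \<forall>x\<in>Q. x \<bullet> y \<ge> -1}"

definition reflexive_polytope :: "'a::euclidean_space set \<Rightarrow> bool" where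
  "reflexive_polytope Q \<longleftrightarrow> lattice_polytope Q \<and> 0 \<in> interior Q \<and> lattice_polytope (dual_polytope Q)"

text \<open>Minkowski sum of a finite family of sets.\<close>
definition minkowski_sum :: "('i::finite \<Rightarrow> 'a::euclidean_space set) \<Rightarrow> 'a set" where
  "minkowski_sum A = {\<Sum>i\<in>UNIV. f i | f. \<forall>i. f i \<in> A i}"

definition centered_nef_partition :: "'a::euclidean_space set \<Rightarrow> ('i::finite \<Rightarrow> 'a set) \<Rightarrow> bool" where
  "centered_nef_partition \<Delta> D \<longleftrightarrow> reflexive_polytope \<Delta> \<and>
     (\<forall>i. lattice_polytope (D i) \<and> 0 \<in> D i) \<and> \<Delta> = minkowski_sum D"

definition dual_nef :: "('i::finite \<Rightarrow> 'a::euclidean_space set) \<Rightarrow> 'i \<Rightarrow> 'a set" where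
  "dual_nef D i = {y. \<forall>j. \<forall>x\<in>D j. x \<bullet> y \<ge> - (if i = j then 1 else 0)}"

text \<open>Cayley polytope: Conv(D_1 \<times> e_1, ..., D_r \<times> e_r) in M_R \<times> R^r.\<close>
definition cayley :: "('i::finite \<Rightarrow> 'a::euclidean_space set) \<Rightarrow> ('a \<times> (real^'i)) set" where
  "cayley D = convex hull (\<Union>i. (\<lambda>x. (x, axis i 1)) ` D i)"

text \<open>Ehrhart series: coefficient j is the number of lattice points of jQ.\<close>
definition ehrhart_series :: "'a::euclidean_space set \<Rightarrow> int fps" where
  "ehrhart_series Q = Abs_fps (\<lambda>j. int (card (lattice_points \<inter> (\<lambda>x. real j *\<^sub>R x) ` Q)))"

definition h_star :: "'a::euclidean_space set \<Rightarrow> int fps" where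
  "h_star Q = (1 - fps_X) ^ (nat (aff_dim Q) + 1) * ehrhart_series Q"

end

theory Submission
  imports Defs
begin

(* ---- part A ---- *)


definition hmin :: "'a::euclidean_space set \<Rightarrow> 'a \<Rightarrow> real" where
  "hmin T y = Min ((\<lambda>x. x \<bullet> y) ` T)"

lemma hmin_le:
  assumes "finite T" "x \<in> convex hull T"
  shows "hmin T y \<le> x \<bullet> y"
proof -
  have c: "convex {x. hmin T y \<le> x \<bullet> y}"
    using convex_halfspace_ge[of "hmin T y" y] by (simp add: inner_commute)
  have "convex hull T \<subseteq> {x. hmin T y \<le> x \<bullet> y}"
    by (rule hull_minimal) (use c in \<open>auto simp: hmin_def assms(1)\<close>)
  then show ?thesis using assms(2) by auto
qed

lemma hmin_attained:
  assumes "finite T" "T \<noteq> {}"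
  shows "\<exists>x\<in>T. x \<bullet> y = hmin T y"
proof -
  have "hmin T y \<in> (\<lambda>x. x \<bullet> y) ` T" unfolding hmin_def using assms by (intro Min_in) auto
  then show ?thesis by auto
qed

lemma lattice_inner_int:
  assumes "x \<in> lattice_points" "y \<in> lattice_points"
  shows "x \<bullet> y \<in> \<int>"
proof -
  have "x \<bullet> y = (\<Sum>b\<in>Basis. (x \<bullet> b) * (y \<bullet> b))" by (rule euclidean_inner)
  also have "\<dots> \<in> \<int>" using assms unfolding lattice_points_def
    by (intro Ints_sum Ints_mult) auto
  finally show ?thesis .
qed

lemma hmin_int:
  assumes "finite T" "T \<noteq> {}" "T \<subseteq> lattice_points" "y \<in> lattice_points"
  shows "hmin T y \<in> \<int>"
  using hmin_attained[OF assms(1,2), of y] lattice_inner_int assms(3,4) by (metis subsetD)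

lemma lattice_points_bounded_finite:
  assumes "bounded B"
  shows "finite (lattice_points \<inter> (B::'a::euclidean_space set))"
proof -
  obtain R where R: "\<And>x. x \<in> B \<Longrightarrow> norm x \<le> R" using assms bounded_iff by blast
  define K where "K = (of_int ` {-\<lceil>R\<rceil>..\<lceil>R\<rceil>} :: real set)"
  have fK: "finite K" unfolding K_def by simp
  have "(\<lambda>x. restrict (\<lambda>b. x \<bullet> b) Basis) ` (lattice_points \<inter> B) \<subseteq> PiE Basis (\<lambda>_. K)"
  proof (rule image_subsetI)
    fix x assume "x \<in> lattice_points \<inter> B"
    then have x: "x \<in> lattice_points" "x \<in> B" by auto
    show "restrict (\<lambda>b. x \<bullet> b) Basis \<in> PiE Basis (\<lambda>_. K)"
    proof -
      have "x \<bullet> b \<in> K" if b: "b \<in> Basis" for b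
      proof -
      have "x \<bullet> b \<in> \<int>" using x b unfolding lattice_points_def by auto
      then obtain k where k: "x \<bullet> b = of_int k" by (auto elim: Ints_cases)
      have "\<bar>x \<bullet> b\<bar> \<le> R" using Basis_le_norm[OF b, of x] R[OF x(2)] by linarith
      then have "real_of_int \<bar>k\<bar> \<le> R" using k by simp
      then have "real_of_int \<bar>k\<bar> \<le> real_of_int \<lceil>R\<rceil>" using le_of_int_ceiling[of R] by linarith
      then have "\<bar>k\<bar> \<le> \<lceil>R\<rceil>" by (simp only: of_int_le_iff)
      then show "x \<bullet> b \<in> K" unfolding K_def k by (intro imageI) (simp add: abs_le_iff)
    qed
    then show ?thesis by (simp add: restrict_PiE_iff)
    qed
  qed
  moreover have "inj_on (\<lambda>x. restrict (\<lambda>b. x \<bullet> b) Basis) (lattice_points \<inter> B)"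
  proof (rule inj_onI)
    fix x y :: 'a assume "restrict (\<lambda>b. x \<bullet> b) Basis = restrict (\<lambda>b. y \<bullet> b) Basis"
    then have "\<forall>b\<in>Basis. x \<bullet> b = y \<bullet> b" by (metis restrict_apply')
    then show "x = y" by (metis euclidean_eqI)
  qed
  ultimately show ?thesis
    by (metis finite_PiE finite_Basis fK finite_imageD finite_subset)
qed


(* ---- part B ---- *)


locale nef =
  fixes \<Delta> :: "'a::euclidean_space set" and D :: "'r::finite \<Rightarrow> 'a set"
  assumes cnp: "centered_nef_partition \<Delta> D"
begin

lemma reflD: "reflexive_polytope \<Delta>" and D0: "\<And>i. 0 \<in> D i" and Dlp: "\<And>i. lattice_polytope (D i)"
  and Delta_eq: "\<Delta> = minkowski_sum D"
  using cnp unfolding centered_nef_partition_def by auto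

definition T where "T i = (SOME S. finite S \<and> S \<subseteq> lattice_points \<and> D i = convex hull S)"

lemma T: "finite (T i)" "T i \<subseteq> lattice_points" "D i = convex hull (T i)"
proof -
  have "\<exists>S. finite S \<and> S \<subseteq> lattice_points \<and> D i = convex hull S"
    using Dlp[of i] unfolding lattice_polytope_def by auto
  then have "finite (T i) \<and> T i \<subseteq> lattice_points \<and> D i = convex hull (T i)"
    unfolding T_def by (rule someI_ex)
  then show "finite (T i)" "T i \<subseteq> lattice_points" "D i = convex hull (T i)" by auto
qed

lemma T_ne: "T i \<noteq> {}" using D0[of i] T(3)[of i] by auto

definition h where "h i y = hmin (T i) y"

lemma h_le: "x \<in> D i \<Longrightarrow> h i y \<le> x \<bullet> y"
  unfolding h_def using hmin_le[OF T(1)] T(3) by auto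

lemma h_att: "\<exists>x\<in>D i. x \<bullet> y = h i y"
proof -
  obtain x where x: "x \<in> T i" "x \<bullet> y = hmin (T i) y" using hmin_attained[OF T(1) T_ne, of i y] by blast
  have "x \<in> D i" using x(1) T(3)[of i] hull_subset[of "T i" convex] by auto
  then show ?thesis using x(2) unfolding h_def by blast
qed

lemma h_le0: "h i y \<le> 0" using h_le[OF D0[of i], of y] by simp

lemma h_int: "y \<in> lattice_points \<Longrightarrow> h i y \<in> \<int>"
  unfolding h_def using hmin_int[OF T(1) T_ne T(2)] by auto

lemma h_ge_iff: "(\<forall>x\<in>D i. c \<le> x \<bullet> y) \<longleftrightarrow> c \<le> h i y"
  using h_le h_att by (metis order_trans)

lemma h_sum:
  assumes "\<And>k. k \<in> K \<Longrightarrow> 0 \<le> l k"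
  shows "(\<Sum>k\<in>K. l k * h i (v k)) \<le> h i (\<Sum>k\<in>K. l k *\<^sub>R v k)"
proof -
  obtain x where x: "x \<in> D i" "x \<bullet> (\<Sum>k\<in>K. l k *\<^sub>R v k) = h i (\<Sum>k\<in>K. l k *\<^sub>R v k)"
    using h_att by blast
  have "(\<Sum>k\<in>K. l k * h i (v k)) \<le> (\<Sum>k\<in>K. l k * (x \<bullet> v k))"
    by (intro sum_mono mult_left_mono h_le x(1) assms)
  also have "\<dots> = x \<bullet> (\<Sum>k\<in>K. l k *\<^sub>R v k)" by (simp add: inner_sum_right)
  finally show ?thesis using x(2) by simp
qed

lemma h_add: "h i y + h i z \<le> h i (y + z)"
  using h_sum[of "{0::nat,1}" "\<lambda>_. 1" i "\<lambda>k. if k = 0 then y else z"] by simp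

lemma h_scale: "0 \<le> c \<Longrightarrow> h i (c *\<^sub>R y) = c * h i y"
proof -
  assume c: "0 \<le> c"
  obtain x where x: "x \<in> D i" "x \<bullet> y = h i y" using h_att by blast
  obtain x' where x': "x' \<in> D i" "x' \<bullet> (c *\<^sub>R y) = h i (c *\<^sub>R y)" using h_att by blast
  have "h i (c *\<^sub>R y) \<le> x \<bullet> (c *\<^sub>R y)" by (rule h_le[OF x(1)])
  moreover have "c * h i y \<le> c * (x' \<bullet> y)" by (intro mult_left_mono h_le x'(1) c)
  ultimately show ?thesis using x x' by simp
qed

lemma h_zero: "h i 0 = 0" using h_scale[of 0 i 0] by simp

lemma Delta_le: "x \<in> \<Delta> \<Longrightarrow> (\<Sum>i\<in>UNIV. h i y) \<le> x \<bullet> y"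
proof -
  assume "x \<in> \<Delta>"
  then obtain f where f: "x = (\<Sum>i\<in>UNIV. f i)" "\<And>i. f i \<in> D i"
    using Delta_eq unfolding minkowski_sum_def by auto
  have "(\<Sum>i\<in>UNIV. h i y) \<le> (\<Sum>i\<in>UNIV. f i \<bullet> y)" by (intro sum_mono h_le f(2))
  then show ?thesis using f(1) by (simp add: inner_sum_left)
qed

lemma Delta_att: "\<exists>x\<in>\<Delta>. x \<bullet> y = (\<Sum>i\<in>UNIV. h i y)"
proof -
  have "\<forall>i. \<exists>x\<in>D i. x \<bullet> y = h i y" using h_att by blast
  then obtain f where f: "\<And>i. f i \<in> D i" "\<And>i. f i \<bullet> y = h i y" by metis
  have "(\<Sum>i\<in>UNIV. f i) \<in> \<Delta>" using f(1) Delta_eq unfolding minkowski_sum_def by auto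
  moreover have "(\<Sum>i\<in>UNIV. f i) \<bullet> y = (\<Sum>i\<in>UNIV. h i y)" using f(2) by (simp add: inner_sum_left)
  ultimately show ?thesis by blast
qed

lemma dual_Delta_iff: "y \<in> dual_polytope \<Delta> \<longleftrightarrow> -1 \<le> (\<Sum>i\<in>UNIV. h i y)"
proof
  assume "y \<in> dual_polytope \<Delta>"
  then show "-1 \<le> (\<Sum>i\<in>UNIV. h i y)" using Delta_att[of y] unfolding dual_polytope_def by force
next
  assume a: "-1 \<le> (\<Sum>i\<in>UNIV. h i y)"
  have "-1 \<le> x \<bullet> y" if "x \<in> \<Delta>" for x using Delta_le[OF that, of y] a by linarith
  then show "y \<in> dual_polytope \<Delta>" unfolding dual_polytope_def by blast
qed

lemma H_neg: assumes "y \<noteq> 0" shows "(\<Sum>i\<in>UNIV. h i y) < 0"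
proof -
  have "0 \<in> interior \<Delta>" using reflD unfolding reflexive_polytope_def by auto
  then obtain e where e: "e > 0" "ball 0 e \<subseteq> \<Delta>" using mem_interior by blast
  define x where "x = (- (e / 2) / norm y) *\<^sub>R y"
  have "norm x = e / 2" using assms e unfolding x_def by simp
  then have "x \<in> \<Delta>" using e by auto
  have "x \<bullet> y = - (e / 2) * norm y" unfolding x_def using assms
    by (simp add: power2_norm_eq_inner[symmetric] power2_eq_square)
  also have "\<dots> < 0" using e assms by simp
  finally show ?thesis using Delta_le[OF \<open>x \<in> \<Delta>\<close>, of y] by linarith
qed

definition S where "S = (SOME S. finite S \<and> S \<subseteq> lattice_points \<and> dual_polytope \<Delta> = convex hull S)"

lemma S: "finite S" "S \<subseteq> lattice_points" "dual_polytope \<Delta> = convex hull S"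
proof -
  have "\<exists>S. finite S \<and> S \<subseteq> lattice_points \<and> dual_polytope \<Delta> = convex hull S"
    using reflD unfolding reflexive_polytope_def lattice_polytope_def by auto
  then have "finite S \<and> S \<subseteq> lattice_points \<and> dual_polytope \<Delta> = convex hull S"
    unfolding S_def by (rule someI_ex)
  then show "finite S" "S \<subseteq> lattice_points" "dual_polytope \<Delta> = convex hull S" by auto
qed

lemma S_dual: "s \<in> S \<Longrightarrow> -1 \<le> (\<Sum>i\<in>UNIV. h i s)"
proof -
  assume "s \<in> S"
  then have "s \<in> dual_polytope \<Delta>" using S(3) hull_subset[of S convex] by auto
  then show ?thesis using dual_Delta_iff by simp
qed

lemma int_nonpos: "(a::real) \<in> \<int> \<Longrightarrow> a \<le> 0 \<Longrightarrow> a \<noteq> 0 \<Longrightarrow> a \<le> -1"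
proof -
  assume a: "a \<in> \<int>" "a \<le> 0" "a \<noteq> 0"
  then obtain k where k: "a = of_int k" by (auto elim: Ints_cases)
  then have "k \<le> 0" "k \<noteq> 0" using a by simp_all
  then have "k \<le> -1" by linarith
  then show "a \<le> -1" using k by simp
qed

lemma S_cases:
  assumes "s \<in> S"
  shows "s = 0 \<or> (\<exists>i. h i s = -1 \<and> (\<forall>j. j \<noteq> i \<longrightarrow> h j s = 0))"
proof (cases "\<forall>i. h i s = 0")
  case True
  then have "(\<Sum>i\<in>UNIV. h i s) = 0" by simp
  then show ?thesis using H_neg by fastforce
next
  case False
  then obtain i where i: "h i s \<noteq> 0" by blast
  have int: "h j s \<in> \<int>" for j using h_int S(2) assms by auto
  have hi: "h i s \<le> -1" using int_nonpos[OF int h_le0 i] .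
  have split: "(\<Sum>j\<in>UNIV. h j s) = h i s + (\<Sum>j\<in>UNIV - {i}. h j s)"
    by (simp add: sum.remove)
  have nonp: "(\<Sum>j\<in>UNIV - {i}. h j s) \<le> 0" by (intro sum_nonpos h_le0)
  have "0 \<le> (\<Sum>j\<in>UNIV - {i}. h j s)" using S_dual[OF assms] split hi by linarith
  then have z: "(\<Sum>j\<in>UNIV - {i}. h j s) = 0" using nonp by linarith
  have z': "(\<Sum>j\<in>UNIV - {i}. - h j s) = 0" using z by (simp add: sum_negf)
  have "\<forall>j\<in>UNIV - {i}. - h j s = 0"
    using sum_nonneg_eq_0_iff[of "UNIV - {i}" "\<lambda>j. - h j s"] z' h_le0 by simp
  then have "\<forall>j\<in>UNIV - {i}. h j s = 0" by simp
  moreover have "h i s = -1" using S_dual[OF assms] split z hi by linarith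
  ultimately show ?thesis by auto
qed

lemma KEY: "\<exists>l. (\<forall>s\<in>S. 0 \<le> l s) \<and> y = (\<Sum>s\<in>S. l s *\<^sub>R s) \<and> (\<Sum>s\<in>S. l s) = - (\<Sum>i\<in>UNIV. h i y)
   \<and> (\<forall>i. h i y = (\<Sum>s\<in>S. l s * h i s))"
proof (cases "y = 0")
  case True
  then show ?thesis by (intro exI[of _ "\<lambda>_. 0"]) (simp add: h_zero)
next
  case False
  define t where "t = - (\<Sum>i\<in>UNIV. h i y)"
  have t: "t > 0" using H_neg[OF False] unfolding t_def by simp
  have "(\<Sum>i\<in>UNIV. h i ((1/t) *\<^sub>R y)) = (1/t) * (\<Sum>i\<in>UNIV. h i y)"
    using t by (simp add: h_scale sum_distrib_left)
  also have "\<dots> = -1" using t unfolding t_def by simp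
  finally have "(1/t) *\<^sub>R y \<in> convex hull S" using dual_Delta_iff S(3) by auto
  then obtain u where u: "\<forall>s\<in>S. 0 \<le> u s" "sum u S = 1" "(\<Sum>s\<in>S. u s *\<^sub>R s) = (1/t) *\<^sub>R y"
    using convex_hull_finite[OF S(1)] by auto
  define l where "l s = t * u s" for s
  have l0: "\<forall>s\<in>S. 0 \<le> l s" using u t unfolding l_def by simp
  have ly: "y = (\<Sum>s\<in>S. l s *\<^sub>R s)"
  proof -
    have "(\<Sum>s\<in>S. l s *\<^sub>R s) = t *\<^sub>R (\<Sum>s\<in>S. u s *\<^sub>R s)"
      unfolding l_def by (simp add: scaleR_sum_right)
    also have "\<dots> = y" using u(3) t by simp
    finally show ?thesis by simp
  qed
  have lsum: "(\<Sum>s\<in>S. l s) = t" using u(2) unfolding l_def by (simp add: sum_distrib_left[symmetric])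
  have ge: "(\<Sum>s\<in>S. l s * h i s) \<le> h i y" for i
  proof -
    have "(\<Sum>s\<in>S. l s * h i s) \<le> h i (\<Sum>s\<in>S. l s *\<^sub>R s)" by (rule h_sum) (use l0 in auto)
    then show ?thesis by (simp only: ly[symmetric])
  qed
  have "(\<Sum>i\<in>UNIV. (\<Sum>s\<in>S. l s * h i s)) = (\<Sum>s\<in>S. l s * (\<Sum>i\<in>UNIV. h i s))"
    by (subst sum.swap) (simp add: sum_distrib_left)
  also have "\<dots> \<ge> (\<Sum>s\<in>S. l s * (-1))"
    by (intro sum_mono mult_left_mono S_dual) (use l0 in auto)
  finally have A: "(\<Sum>i\<in>UNIV. h i y) \<le> (\<Sum>i\<in>UNIV. (\<Sum>s\<in>S. l s * h i s))"
    using lsum unfolding t_def by (simp add: sum_negf)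
  have eq: "h i y = (\<Sum>s\<in>S. l s * h i s)" for i
  proof -
    have "(\<Sum>i\<in>UNIV. h i y - (\<Sum>s\<in>S. l s * h i s)) \<le> 0" using A by (simp add: sum_subtractf)
    moreover have "\<forall>i\<in>UNIV. 0 \<le> h i y - (\<Sum>s\<in>S. l s * h i s)" using ge by auto
    ultimately have "\<forall>i\<in>UNIV. h i y - (\<Sum>s\<in>S. l s * h i s) = 0"
    proof -
      have "0 \<le> (\<Sum>i\<in>UNIV. h i y - (\<Sum>s\<in>S. l s * h i s))"
        using ge by (intro sum_nonneg) auto
      then have "(\<Sum>i\<in>UNIV. h i y - (\<Sum>s\<in>S. l s * h i s)) = 0" using \<open>_ \<le> 0\<close> by linarith
      then show ?thesis
        using sum_nonneg_eq_0_iff[of UNIV "\<lambda>i. h i y - (\<Sum>s\<in>S. l s * h i s)"] ge by simp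
    qed
    then show ?thesis by auto
  qed
  show ?thesis using l0 ly lsum eq unfolding t_def by blast
qed

end

(* ---- part C ---- *)


lemma convex_dual: "convex (dual_polytope (Q::'a::euclidean_space set))"
  unfolding convex_def
proof (intro ballI allI impI)
  fix y z :: 'a and u v :: real
  assume y: "y \<in> dual_polytope Q" and z: "z \<in> dual_polytope Q" and uv: "0 \<le> u" "0 \<le> v" "u + v = 1"
  show "u *\<^sub>R y + v *\<^sub>R z \<in> dual_polytope Q" unfolding dual_polytope_def
  proof (intro CollectI ballI)
    fix x assume x: "x \<in> Q"
    have "u * (-1) \<le> u * (x \<bullet> y)" using y x uv unfolding dual_polytope_def by (intro mult_left_mono) auto
    moreover have "v * (-1) \<le> v * (x \<bullet> z)" using z x uv unfolding dual_polytope_def by (intro mult_left_mono) auto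
    ultimately show "- 1 \<le> x \<bullet> (u *\<^sub>R y + v *\<^sub>R z)" using uv by (simp add: inner_add_right)
  qed
qed

lemma dual_hull: "dual_polytope (convex hull A) = dual_polytope A"
proof
  show "dual_polytope (convex hull A) \<subseteq> dual_polytope A"
    unfolding dual_polytope_def using hull_subset[of A convex] by blast
next
  show "dual_polytope A \<subseteq> dual_polytope (convex hull A)"
  proof
    fix y assume y: "y \<in> dual_polytope A"
    have c: "convex {x. -1 \<le> x \<bullet> y}"
      using convex_halfspace_ge[of "-1" y] by (simp add: inner_commute)
    have "convex hull A \<subseteq> {x. -1 \<le> x \<bullet> y}"
      by (rule hull_minimal) (use y c in \<open>auto simp: dual_polytope_def\<close>)
    then show "y \<in> dual_polytope (convex hull A)" unfolding dual_polytope_def by auto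
  qed
qed

lemma sub_conv:
  fixes l :: "'b \<Rightarrow> real"
  assumes K: "convex K" "0 \<in> K" and A: "finite A" and l: "\<And>a. a \<in> A \<Longrightarrow> 0 \<le> l a"
    and L: "sum l A \<le> 1" and mem: "\<And>a. a \<in> A \<Longrightarrow> l a \<noteq> 0 \<Longrightarrow> v a \<in> K"
  shows "(\<Sum>a\<in>A. l a *\<^sub>R v a) \<in> K"
proof -
  define w where "w a = (if l a = 0 then 0 else v a)" for a
  have w: "a \<in> A \<Longrightarrow> w a \<in> K" for a using mem K(2) unfolding w_def by auto
  have eq: "(\<Sum>a\<in>A. l a *\<^sub>R v a) = (\<Sum>a\<in>A. l a *\<^sub>R w a)"
    by (rule sum.cong) (auto simp: w_def)
  show ?thesis
  proof (cases "sum l A = 0")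
    case True
    then have "\<forall>a\<in>A. l a = 0" using sum_nonneg_eq_0_iff[OF A] l by blast
    then show ?thesis using K(2) by simp
  next
    case False
    define L where "L = sum l A"
    have Lpos: "0 < L" using False l sum_nonneg[of A l] unfolding L_def by force
    have in1: "(\<Sum>a\<in>A. (l a / L) *\<^sub>R w a) \<in> K"
    proof (rule convex_sum[OF A K(1)])
      show "(\<Sum>a\<in>A. l a / L) = 1" using Lpos unfolding L_def by (simp add: sum_divide_distrib[symmetric])
    qed (use l Lpos w in auto)
    have "L *\<^sub>R (\<Sum>a\<in>A. (l a / L) *\<^sub>R w a) + (1 - L) *\<^sub>R 0 \<in> K"
      using convexD[OF K(1) in1 K(2), of L "1 - L"] Lpos L unfolding L_def by auto
    moreover have "L *\<^sub>R (\<Sum>a\<in>A. (l a / L) *\<^sub>R w a) = (\<Sum>a\<in>A. l a *\<^sub>R w a)"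
      using Lpos by (simp add: scaleR_sum_right)
    ultimately show ?thesis using eq by simp
  qed
qed

lemma minkowski_sum_setsum: "minkowski_sum A = (\<Sum>i\<in>UNIV. A i)"
  unfolding minkowski_sum_def by (simp add: set_sum_alt)

lemma minkowski_sum_hull:
  assumes "\<And>i. finite (F i)"
  shows "minkowski_sum (\<lambda>i. convex hull (F i)) = convex hull (minkowski_sum F)"
  unfolding minkowski_sum_setsum by (simp add: convex_hull_set_sum)

lemma lattice_sum: "(\<And>i. i \<in> I \<Longrightarrow> f i \<in> lattice_points) \<Longrightarrow> (\<Sum>i\<in>I. f i) \<in> lattice_points"
  unfolding lattice_points_def by (auto simp: inner_sum_left intro!: Ints_sum)

lemma minkowski_sum_finite:
  assumes "\<And>i. finite ((F::'r::finite \<Rightarrow> 'a::euclidean_space set) i)"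
  shows "finite (minkowski_sum F)"
proof -
  have "minkowski_sum F = (\<lambda>f. \<Sum>i\<in>UNIV. f i) ` PiE UNIV F"
    unfolding minkowski_sum_def by (auto simp: PiE_iff)
  then show ?thesis using assms by (simp add: finite_PiE)
qed

lemma minkowski_sum_lattice:
  assumes "\<And>i. F i \<subseteq> lattice_points"
  shows "minkowski_sum F \<subseteq> lattice_points"
  unfolding minkowski_sum_def using assms by (auto intro!: lattice_sum)

context nef
begin

definition C where "C = convex hull (\<Union>i. D i)"
definition nab where "nab = dual_nef D"
definition Nab where "Nab = minkowski_sum nab"

lemma nab_iff: "y \<in> nab i \<longleftrightarrow> (\<forall>j. - (if i = j then 1 else 0) \<le> h j y)"
  unfolding nab_def dual_nef_def using h_ge_iff by blast

lemma nab_0: "0 \<in> nab i" using nab_iff h_zero by simp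

lemma nab_convex: "convex (nab i)"
  unfolding convex_def
proof (intro ballI allI impI)
  fix y z :: 'a and u v :: real assume y: "y \<in> nab i" and z: "z \<in> nab i" and uv: "0 \<le> u" "0 \<le> v" "u + v = 1"
  show "u *\<^sub>R y + v *\<^sub>R z \<in> nab i" unfolding nab_iff
  proof
    fix j
    define c :: real where "c = - (if i = j then 1 else 0)"
    have "c \<le> h j y" "c \<le> h j z" using y z nab_iff c_def by auto
    then have "u * c \<le> u * h j y" "v * c \<le> v * h j z" using uv by (auto intro: mult_left_mono)
    moreover have "h j (u *\<^sub>R y) + h j (v *\<^sub>R z) \<le> h j (u *\<^sub>R y + v *\<^sub>R z)" by (rule h_add)
    ultimately have "u * c + v * c \<le> h j (u *\<^sub>R y + v *\<^sub>R z)" using uv by (simp add: h_scale)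
    then show "c \<le> h j (u *\<^sub>R y + v *\<^sub>R z)" using uv by (simp add: distrib_right[symmetric])
  qed
qed

definition g where "g s = (SOME i. \<forall>j. j \<noteq> i \<longrightarrow> h j s = 0)"

lemma g: assumes "s \<in> S" shows "\<forall>j. j \<noteq> g s \<longrightarrow> h j s = 0"
proof -
  have "\<exists>i. \<forall>j. j \<noteq> i \<longrightarrow> h j s = 0"
    using S_cases[OF assms] h_zero by auto
  then show ?thesis unfolding g_def by (rule someI_ex)
qed

lemma S_nab: assumes "s \<in> S" shows "s \<in> nab (g s)"
proof -
  have split: "(\<Sum>j\<in>UNIV. h j s) = h (g s) s + (\<Sum>j\<in>UNIV - {g s}. h j s)"
    by (simp add: sum.remove)
  have "(\<Sum>j\<in>UNIV - {g s}. h j s) = 0" using g[OF assms] by simp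
  then have "-1 \<le> h (g s) s" using S_dual[OF assms] split by simp
  then show ?thesis unfolding nab_iff using g[OF assms] by auto
qed

lemma nab_sub_dual: "nab i \<subseteq> dual_polytope \<Delta>"
proof
  fix y assume y: "y \<in> nab i"
  have "(\<Sum>j\<in>UNIV. - (if i = j then 1 else 0)) \<le> (\<Sum>j\<in>UNIV. h j y)"
    using y unfolding nab_iff by (intro sum_mono) auto
  then show "y \<in> dual_polytope \<Delta>" unfolding dual_Delta_iff by (simp add: sum_negf)
qed

theorem part3: "convex hull (\<Union>i. nab i) = dual_polytope \<Delta>"
proof
  show "convex hull (\<Union>i. nab i) \<subseteq> dual_polytope \<Delta>"
    by (rule hull_minimal) (use nab_sub_dual convex_dual in auto)
next
  have "S \<subseteq> (\<Union>i. nab i)" using S_nab by blast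
  then show "dual_polytope \<Delta> \<subseteq> convex hull (\<Union>i. nab i)" unfolding S(3) by (rule hull_mono)
qed

lemma CL: assumes "\<And>i. -1 \<le> h i y" shows "y \<in> Nab"
proof -
  obtain l where l0: "\<forall>s\<in>S. 0 \<le> l s" and ly: "y = (\<Sum>s\<in>S. l s *\<^sub>R s)"
    and leq: "\<forall>i. h i y = (\<Sum>s\<in>S. l s * h i s)" using KEY[of y] by blast
  define f where "f i = (\<Sum>s\<in>S. (if g s = i then l s else 0) *\<^sub>R s)" for i
  have fsum: "(\<Sum>i\<in>UNIV. f i) = y"
  proof -
    have "(\<Sum>i\<in>UNIV. f i) = (\<Sum>s\<in>S. \<Sum>i\<in>UNIV. (if g s = i then l s else 0) *\<^sub>R s)"
      unfolding f_def by (rule sum.swap)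
    also have "\<dots> = (\<Sum>s\<in>S. l s *\<^sub>R s)"
    proof (rule sum.cong[OF refl])
      fix s
      have "(\<Sum>i\<in>UNIV. (if g s = i then l s else 0) *\<^sub>R s) = (\<Sum>i\<in>UNIV. (if g s = i then l s *\<^sub>R s else 0))"
        by (rule sum.cong) auto
      also have "\<dots> = l s *\<^sub>R s" by simp
      finally show "(\<Sum>i\<in>UNIV. (if g s = i then l s else 0) *\<^sub>R s) = l s *\<^sub>R s" .
    qed
    finally show ?thesis using ly by simp
  qed
  have fnab: "f i \<in> nab i" for i
    unfolding nab_iff
  proof
    fix j
    have lb: "(\<Sum>s\<in>S. (if g s = i then l s else 0) * h j s) \<le> h j (f i)"
      unfolding f_def by (rule h_sum) (use l0 in auto)
    show "- (if i = j then 1 else 0) \<le> h j (f i)"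
    proof (cases "i = j")
      case True
      have "(\<Sum>s\<in>S. (if g s = i then l s else 0) * h j s) = (\<Sum>s\<in>S. l s * h j s)"
        using g True by (intro sum.cong) auto
      then show ?thesis using lb leq assms[of j] True by simp
    next
      case False
      have "(\<Sum>s\<in>S. (if g s = i then l s else 0) * h j s) = 0"
        using g False by (intro sum.neutral) auto
      then show ?thesis using lb False by simp
    qed
  qed
  have "\<exists>f'. y = (\<Sum>i\<in>UNIV. f' i) \<and> (\<forall>i. f' i \<in> nab i)"
    by (rule exI[of _ f]) (use fsum fnab in auto)
  then show ?thesis unfolding Nab_def minkowski_sum_def by simp
qed

lemma DsubC: "D i \<subseteq> C"
proof -
  have "D i \<subseteq> (\<Union>i. D i)" by blast
  also have "\<dots> \<subseteq> C" unfolding C_def by (rule hull_subset)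
  finally show ?thesis .
qed

lemma C_convex: "convex C" unfolding C_def by simp

lemma C0: "0 \<in> C" using DsubC[of undefined] D0[of undefined] by (rule subsetD)

lemma C_hullT: "C = convex hull (\<Union>i. T i)"
proof -
  have "C = convex hull (\<Union>i. convex hull (T i))" unfolding C_def using T(3) by simp
  also have "\<dots> = convex hull (\<Union>i. T i)"
  proof (rule antisym)
    show "convex hull (\<Union>i. convex hull T i) \<subseteq> convex hull (\<Union>i. T i)"
      by (intro hull_minimal) (auto intro: hull_mono[THEN subsetD])
    show "convex hull (\<Union>i. T i) \<subseteq> convex hull (\<Union>i. convex hull T i)"
      by (intro hull_mono) (auto intro: hull_inc)
  qed
  finally show ?thesis .
qed

lemma C_compact: "compact C"
  unfolding C_hullT by (rule finite_imp_compact_convex_hull) (simp add: T(1))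

lemma dualC: "dual_polytope C = Nab"
proof
  show "dual_polytope C \<subseteq> Nab"
  proof
    fix y assume "y \<in> dual_polytope C"
    then have "\<forall>x\<in>D i. -1 \<le> x \<bullet> y" for i using DsubC unfolding dual_polytope_def by blast
    then show "y \<in> Nab" using CL h_ge_iff by blast
  qed
next
  show "Nab \<subseteq> dual_polytope C"
  proof
    fix y assume "y \<in> Nab"
    then obtain f where f: "y = (\<Sum>j\<in>UNIV. f j)" "\<And>j. f j \<in> nab j"
      unfolding Nab_def minkowski_sum_def by auto
    have "-1 \<le> x \<bullet> y" if xin: "x \<in> (\<Union>i. D i)" for x
    proof -
      obtain i where x: "x \<in> D i" using xin by blast
      have "(\<Sum>j\<in>UNIV. - (if j = i then 1 else 0)) \<le> (\<Sum>j\<in>UNIV. x \<bullet> f j)"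
      proof (rule sum_mono)
        fix j
        have "- (if j = i then 1 else 0) \<le> h i (f j)" using f(2)[of j] unfolding nab_iff by auto
        also have "\<dots> \<le> x \<bullet> f j" by (rule h_le[OF x])
        finally show "- (if j = i then 1 else 0) \<le> x \<bullet> f j" .
      qed
      then show ?thesis using f(1) by (simp add: inner_sum_right sum_negf)
    qed
    then have "y \<in> dual_polytope (\<Union>i. D i)" unfolding dual_polytope_def by blast
    then show "y \<in> dual_polytope C" unfolding C_def dual_hull .
  qed
qed

theorem part2: "C = dual_polytope Nab"
proof
  show "C \<subseteq> dual_polytope Nab" unfolding dualC[symmetric] dual_polytope_def
    by (auto simp: inner_commute)
next
  show "dual_polytope Nab \<subseteq> C"
  proof
    fix x assume x: "x \<in> dual_polytope Nab"
    show "x \<in> C"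
    proof (rule ccontr)
      assume "x \<notin> C"
      then obtain a b where ab: "a \<bullet> x < b" "\<forall>z\<in>C. b < a \<bullet> z"
        using separating_hyperplane_closed_point[OF C_convex compact_imp_closed[OF C_compact]] by blast
      have b: "b < 0" using ab(2) C0 by force
      define y where "y = (- 1 / b) *\<^sub>R a"
      have c: "0 < - 1 / b" using b by simp
      have "x \<bullet> y = (- 1 / b) * (a \<bullet> x)" unfolding y_def by (simp add: inner_commute)
      also have "\<dots> < (- 1 / b) * b" using ab(1) c by (intro mult_strict_left_mono) auto
      finally have xy: "x \<bullet> y < -1" using b by simp
      have "-1 \<le> z \<bullet> y" if "z \<in> C" for z
      proof -
        have "(- 1 / b) * b < (- 1 / b) * (a \<bullet> z)" using ab(2) that c by (intro mult_strict_left_mono) auto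
        then show ?thesis using b unfolding y_def by (simp add: inner_commute)
      qed
      then have "y \<in> Nab" unfolding dualC[symmetric] dual_polytope_def by blast
      then have "-1 \<le> y \<bullet> x" using x unfolding dual_polytope_def by blast
      then show False using xy by (simp add: inner_commute)
    qed
  qed
qed

end

(* ---- part D ---- *)


lemma zero_lattice: "0 \<in> lattice_points" unfolding lattice_points_def by simp

context nef
begin

definition F where "F i = insert 0 {s\<in>S. s \<in> nab i}"

lemma F: "finite (F i)" "F i \<subseteq> lattice_points"
  unfolding F_def using S(1,2) zero_lattice by auto

lemma nab_hull: "nab i = convex hull (F i)"
proof
  show "convex hull (F i) \<subseteq> nab i"
    by (rule hull_minimal) (auto simp: F_def nab_0 nab_convex)
next
  show "nab i \<subseteq> convex hull (F i)"
  proof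
    fix y assume y: "y \<in> nab i"
    obtain l where l0: "\<forall>s\<in>S. 0 \<le> l s" and ly: "y = (\<Sum>s\<in>S. l s *\<^sub>R s)"
      and lsum: "(\<Sum>s\<in>S. l s) = - (\<Sum>j\<in>UNIV. h j y)"
      and leq: "\<forall>j. h j y = (\<Sum>s\<in>S. l s * h j s)" using KEY[of y] by blast
    have hy: "h j y = 0" and terms: "\<forall>s\<in>S. l s * h j s = 0" if j: "j \<noteq> i" for j
    proof -
      have ge: "0 \<le> h j y" using y j unfolding nab_iff by (metis (full_types) add.inverse_neutral)
      have "(\<Sum>s\<in>S. l s * h j s) \<le> 0" using l0 h_le0 by (intro sum_nonpos mult_nonneg_nonpos) auto
      then have z: "(\<Sum>s\<in>S. l s * h j s) = 0" using ge leq by simp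
      then show "h j y = 0" using leq by simp
      have "(\<Sum>s\<in>S. - (l s * h j s)) = 0" using z by (simp add: sum_negf)
      moreover have "\<forall>s\<in>S. 0 \<le> - (l s * h j s)" using l0 h_le0 by (simp add: mult_nonneg_nonpos)
      ultimately show "\<forall>s\<in>S. l s * h j s = 0" using sum_nonneg_eq_0_iff[OF S(1), of "\<lambda>s. - (l s * h j s)"] by simp
    qed
    have sumh: "(\<Sum>j\<in>UNIV. h j y) = h i y"
    proof -
      have "(\<Sum>j\<in>UNIV. h j y) = h i y + (\<Sum>j\<in>UNIV - {i}. h j y)" by (simp add: sum.remove)
      also have "(\<Sum>j\<in>UNIV - {i}. h j y) = 0" using hy by simp
      finally show ?thesis by simp
    qed
    have hi: "-1 \<le> h i y" using y unfolding nab_iff by (metis (full_types))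
    have L: "(\<Sum>s\<in>S. l s) \<le> 1" using lsum sumh hi by simp
    have mem: "s \<in> convex hull (F i)" if s: "s \<in> S" "l s \<noteq> 0" for s
    proof -
      have z: "h j s = 0" if "j \<noteq> i" for j using terms[OF that] s by auto
      have "(\<Sum>j\<in>UNIV. h j s) = h i s + (\<Sum>j\<in>UNIV - {i}. h j s)" by (simp add: sum.remove)
      also have "(\<Sum>j\<in>UNIV - {i}. h j s) = 0" using z by simp
      finally have "-1 \<le> h i s" using S_dual[OF s(1)] by simp
      then have "s \<in> nab i" unfolding nab_iff using z by auto
      then have "s \<in> F i" unfolding F_def using s by auto
      then show ?thesis by (rule hull_inc)
    qed
    have "(\<Sum>s\<in>S. l s *\<^sub>R s) \<in> convex hull (F i)"
      by (rule sub_conv[OF convex_convex_hull hull_inc S(1)]) (use l0 L mem F_def in auto)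
    then show "y \<in> convex hull (F i)" using ly by simp
  qed
qed

lemma Nab_lattice: "lattice_polytope Nab"
proof -
  have "Nab = minkowski_sum (\<lambda>i. convex hull (F i))" unfolding Nab_def using nab_hull by metis
  also have "\<dots> = convex hull (minkowski_sum F)" by (rule minkowski_sum_hull[OF F(1)])
  finally have eq: "Nab = convex hull (minkowski_sum F)" .
  have f: "finite (minkowski_sum F)" by (rule minkowski_sum_finite) (rule F(1))
  have l: "minkowski_sum F \<subseteq> lattice_points" by (rule minkowski_sum_lattice) (rule F(2))
  show ?thesis unfolding lattice_polytope_def
    by (rule exI[of _ "minkowski_sum F"]) (use eq f l in simp)
qed

lemma C_interior: "0 \<in> interior C"
proof -
  have "0 \<in> interior \<Delta>" using reflD unfolding reflexive_polytope_def by auto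
  then obtain e where e: "e > 0" "ball 0 e \<subseteq> \<Delta>" using mem_interior by blast
  define r :: real where "r = real (card (UNIV :: 'r set))"
  have r: "r \<ge> 1" unfolding r_def using card_ge_0_finite[of "UNIV :: 'r set"] by auto
  have "ball (0::'a) (e / r) \<subseteq> C"
  proof
    fix z :: 'a assume z: "z \<in> ball 0 (e / r)"
    have "norm (r *\<^sub>R z) < e" using z r by (simp add: field_simps)
    then have "r *\<^sub>R z \<in> \<Delta>" using e by auto
    then obtain f where f: "r *\<^sub>R z = (\<Sum>i\<in>UNIV. f i)" "\<And>i. f i \<in> D i"
      using Delta_eq unfolding minkowski_sum_def by auto
    have "(\<Sum>i\<in>UNIV. (1 / r) *\<^sub>R f i) \<in> C"
      using r f(2) DsubC by (intro convex_sum[OF _ C_convex]) (auto simp: r_def)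
    moreover have "(\<Sum>i\<in>UNIV. (1 / r) *\<^sub>R f i) = z"
    proof -
      have "(\<Sum>i\<in>UNIV. (1 / r) *\<^sub>R f i) = (1 / r) *\<^sub>R (r *\<^sub>R z)"
        unfolding f(1) by (simp add: scaleR_sum_right)
      also have "\<dots> = z" using r by simp
      finally show ?thesis .
    qed
    ultimately show "z \<in> C" by simp
  qed
  moreover have "0 < e / r" using e r by simp
  ultimately show ?thesis unfolding mem_interior by blast
qed

theorem part1: "reflexive_polytope C"
  unfolding reflexive_polytope_def
proof (intro conjI)
  have "finite (\<Union>i. T i)" using T(1) by simp
  moreover have "(\<Union>i. T i) \<subseteq> lattice_points" using T(2) by blast
  ultimately show "lattice_polytope C" unfolding lattice_polytope_def C_hullT
    by (intro exI[of _ "\<Union>i. T i"]) simp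
  show "0 \<in> interior C" by (rule C_interior)
  show "lattice_polytope (dual_polytope C)" unfolding dualC by (rule Nab_lattice)
qed

end

(* ---- part F1 ---- *)


definition ones :: "int fps" where "ones = Abs_fps (\<lambda>_. 1)"

lemma one_minus_X_ones: "(1 - fps_X) * ones = 1"
proof (rule fps_ext)
  fix n
  have "fps_nth ((1 - fps_X) * ones) n = fps_nth ones n - fps_nth (fps_X * ones) n" by (simp add: algebra_simps)
  then show "fps_nth ((1 - fps_X) * ones) n = fps_nth (1 :: int fps) n" by (simp add: ones_def)
qed

definition wset :: "'i set \<Rightarrow> nat \<Rightarrow> ('i \<Rightarrow> nat) set" where
  "wset I n = {c. (\<forall>i. i \<notin> I \<longrightarrow> c i = 0) \<and> sum c I = n}"

lemma wset_finite:
  assumes I: "finite I" shows "finite (wset I n)"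
proof -
  have "restrict c I \<in> PiE I (\<lambda>_. {0..n})" if "c \<in> wset I n" for c
  proof -
    have "c i \<le> n" if "i \<in> I" for i
      using member_le_sum[of i I c] that I \<open>c \<in> wset I n\<close> unfolding wset_def by auto
    then show ?thesis by (simp add: restrict_PiE_iff)
  qed
  then have sub: "(\<lambda>c. restrict c I) ` wset I n \<subseteq> PiE I (\<lambda>_. {0..n})" by blast
  have inj: "inj_on (\<lambda>c. restrict c I) (wset I n)"
  proof (rule inj_onI)
    fix c c' assume c: "c \<in> wset I n" "c' \<in> wset I n" and eq: "restrict c I = restrict c' I"
    show "c = c'"
    proof
      fix i show "c i = c' i"
        using c eq unfolding wset_def by (cases "i \<in> I") (auto dest: fun_cong[of _ _ i])
    qed
  qed
  show ?thesis
    using finite_subset[OF sub] I by (intro finite_imageD[OF _ inj]) (auto intro: finite_PiE)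
qed

lemma wset_empty: "card (wset {} n) = (if n = 0 then 1 else 0)"
proof -
  have e: "wset {} n = (if n = 0 then {\<lambda>_. 0} else {})" unfolding wset_def by auto
  show ?thesis by (subst e) simp
qed

lemma wset_insert:
  assumes I: "finite I" and a: "a \<notin> I"
  shows "card (wset (insert a I) n) = (\<Sum>k=0..n. card (wset I (n - k)))"
proof -
  define \<Phi> where "\<Phi> = (\<lambda>(k::nat, c::'a \<Rightarrow> nat). c(a := k))"
  have eq: "wset (insert a I) n = \<Phi> ` (SIGMA k:{0..n}. wset I (n - k))"
  proof
    show "\<Phi> ` (SIGMA k:{0..n}. wset I (n - k)) \<subseteq> wset (insert a I) n"
    proof clarify
      fix k c assume k: "k \<in> {0..n}" and c: "c \<in> wset I (n - k)"
      have "sum (c(a := k)) I = sum c I" using a by (intro sum.cong) auto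
      then show "\<Phi> (k, c) \<in> wset (insert a I) n"
        using k c I a unfolding wset_def \<Phi>_def by auto
    qed
  next
    show "wset (insert a I) n \<subseteq> \<Phi> ` (SIGMA k:{0..n}. wset I (n - k))"
    proof
      fix c assume c: "c \<in> wset (insert a I) n"
      have s: "c a + sum c I = n" using c I a unfolding wset_def by auto
      have s2: "sum (c(a := 0)) I = sum c I" using a by (intro sum.cong) auto
      have "c(a := 0) \<in> wset I (n - c a)" using c s s2 unfolding wset_def by auto
      moreover have "c a \<in> {0..n}" using s by auto
      moreover have "c = \<Phi> (c a, c(a := 0))" unfolding \<Phi>_def by auto
      ultimately show "c \<in> \<Phi> ` (SIGMA k:{0..n}. wset I (n - k))" by blast
    qed
  qed
  have inj: "inj_on \<Phi> (SIGMA k:{0..n}. wset I (n - k))"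
  proof (rule inj_onI, clarify)
    fix k c k' c' assume c: "c \<in> wset I (n - k)" and c': "c' \<in> wset I (n - k')"
      and e: "\<Phi> (k, c) = \<Phi> (k', c')"
    have "k = k'" using fun_cong[OF e, of a] unfolding \<Phi>_def by simp
    moreover have "c = c'"
    proof
      fix i
      show "c i = c' i"
      proof (cases "i = a")
        case True then show ?thesis using c c' a unfolding wset_def by auto
      next
        case False then show ?thesis using fun_cong[OF e, of i] unfolding \<Phi>_def by simp
      qed
    qed
    ultimately show "k = k' \<and> c = c'" by simp
  qed
  have "card (wset (insert a I) n) = card (SIGMA k:{0..n}. wset I (n - k))"
    unfolding eq by (rule card_image[OF inj])
  also have "\<dots> = (\<Sum>k=0..n. card (wset I (n - k)))"
    using wset_finite[OF I] by (intro card_SigmaI) auto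
  finally show ?thesis .
qed

lemma wfps:
  assumes "finite I"
  shows "Abs_fps (\<lambda>n. int (card (wset I n))) = ones ^ card I"
  using assms
proof (induction I rule: finite_induct)
  case empty
  show ?case by (rule fps_ext) (simp add: wset_empty)
next
  case (insert a I)
  have "Abs_fps (\<lambda>n. int (card (wset (insert a I) n))) = ones * Abs_fps (\<lambda>n. int (card (wset I n)))"
  proof (rule fps_ext)
    fix n
    show "fps_nth (Abs_fps (\<lambda>n. int (card (wset (insert a I) n)))) n = fps_nth (ones * Abs_fps (\<lambda>n. int (card (wset I n)))) n"
      unfolding fps_mult_nth using wset_insert[OF insert(1,2)] by (simp add: ones_def)
  qed
  then show ?case using insert by simp
qed


(* ---- part E ---- *)


context nef
begin

definition kf where "kf i m = hmin (F i) m"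

lemma F_ne: "F i \<noteq> {}" unfolding F_def by simp

lemma kf_le: "y \<in> nab i \<Longrightarrow> kf i m \<le> y \<bullet> m"
  unfolding kf_def using hmin_le[OF F(1)] nab_hull by auto

lemma F_sub: "F i \<subseteq> nab i" using nab_hull hull_subset[of "F i" convex] by auto

lemma kf_att: "\<exists>y\<in>nab i. y \<bullet> m = kf i m"
proof -
  obtain y where "y \<in> F i" "y \<bullet> m = hmin (F i) m" using hmin_attained[OF F(1) F_ne] by blast
  then show ?thesis unfolding kf_def using F_sub by blast
qed

lemma kf_le0: "kf i m \<le> 0" using kf_le[OF nab_0, of i m] by simp

lemma kf_int: "m \<in> lattice_points \<Longrightarrow> kf i m \<in> \<int>"
  unfolding kf_def using hmin_int[OF F(1) F_ne F(2)] by auto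

definition P where "P a = {\<Sum>i\<in>UNIV. a i *\<^sub>R x i | x. \<forall>i. x i \<in> D i}"

lemma nab_D: "y \<in> nab i \<Longrightarrow> x \<in> D j \<Longrightarrow> - (if i = j then 1 else 0) \<le> x \<bullet> y"
  unfolding nab_def dual_nef_def by blast

lemma P_sub:
  assumes a: "\<And>i. 0 \<le> a i" and m: "m \<in> P a"
  shows "- a i \<le> kf i m"
proof -
  obtain x where x: "m = (\<Sum>j\<in>UNIV. a j *\<^sub>R x j)" "\<And>j. x j \<in> D j" using m unfolding P_def by auto
  obtain y where y: "y \<in> nab i" "y \<bullet> m = kf i m" using kf_att by blast
  have "(\<Sum>j\<in>UNIV. a j * (- (if i = j then 1 else 0))) \<le> (\<Sum>j\<in>UNIV. a j * (x j \<bullet> y))"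
    by (intro sum_mono mult_left_mono nab_D[OF y(1) x(2)] a)
  also have "\<dots> = y \<bullet> m" unfolding x(1) by (simp add: inner_sum_right inner_commute)
  finally have le: "(\<Sum>j\<in>UNIV. a j * (- (if i = j then 1 else 0))) \<le> kf i m" using y(2) by simp
  have "(\<Sum>j\<in>UNIV. a j * (- (if i = j then 1 else 0))) = (\<Sum>j\<in>UNIV. if i = j then - a j else 0)"
    by (rule sum.cong) auto
  also have "\<dots> = - a i" by simp
  finally show ?thesis using le by simp
qed

lemma P_eq: "P a = minkowski_sum (\<lambda>i. (\<lambda>x. a i *\<^sub>R x) ` D i)"
proof
  show "P a \<subseteq> minkowski_sum (\<lambda>i. (\<lambda>x. a i *\<^sub>R x) ` D i)"
    unfolding P_def minkowski_sum_def by auto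
next
  show "minkowski_sum (\<lambda>i. (\<lambda>x. a i *\<^sub>R x) ` D i) \<subseteq> P a"
  proof
    fix p assume "p \<in> minkowski_sum (\<lambda>i. (\<lambda>x. a i *\<^sub>R x) ` D i)"
    then obtain f where f: "p = (\<Sum>i\<in>UNIV. f i)" "\<And>i. f i \<in> (\<lambda>x. a i *\<^sub>R x) ` D i"
      unfolding minkowski_sum_def by auto
    have "\<forall>i. \<exists>x. x \<in> D i \<and> f i = a i *\<^sub>R x" using f(2) by blast
    then obtain x where x: "\<And>i. x i \<in> D i" "\<And>i. f i = a i *\<^sub>R x i" by metis
    have "p = (\<Sum>i\<in>UNIV. a i *\<^sub>R x i)" using f(1) x(2) by simp
    then show "p \<in> P a" unfolding P_def using x(1) by blast
  qed
qed

lemma P_hull: "P a = convex hull (minkowski_sum (\<lambda>i. (\<lambda>x. a i *\<^sub>R x) ` T i))"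
proof -
  have "(\<lambda>x. a i *\<^sub>R x) ` D i = convex hull ((\<lambda>x. a i *\<^sub>R x) ` T i)" for i
    using T(3)[of i] convex_hull_scaling[of "a i" "T i"] by simp
  then have "P a = minkowski_sum (\<lambda>i. convex hull ((\<lambda>x. a i *\<^sub>R x) ` T i))" unfolding P_eq by simp
  also have "\<dots> = convex hull (minkowski_sum (\<lambda>i. (\<lambda>x. a i *\<^sub>R x) ` T i))"
    by (rule minkowski_sum_hull) (simp add: T(1))
  finally show ?thesis .
qed

lemma P_convex: "convex (P a)" unfolding P_hull by simp

lemma P_closed: "closed (P a)"
proof -
  have "finite (minkowski_sum (\<lambda>i. (\<lambda>x. a i *\<^sub>R x) ` T i))"
    by (rule minkowski_sum_finite) (simp add: T(1))
  then show ?thesis unfolding P_hull by (intro compact_imp_closed finite_imp_compact_convex_hull)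
qed

lemma P_att: "\<exists>p\<in>P a. w \<bullet> p = (\<Sum>i\<in>UNIV. a i * h i w)"
proof -
  have "\<forall>i. \<exists>x\<in>D i. x \<bullet> w = h i w" using h_att by blast
  then obtain x where x: "\<And>i. x i \<in> D i" "\<And>i. x i \<bullet> w = h i w" by metis
  have "(\<Sum>i\<in>UNIV. a i *\<^sub>R x i) \<in> P a" unfolding P_def using x(1) by blast
  moreover have "w \<bullet> (\<Sum>i\<in>UNIV. a i *\<^sub>R x i) = (\<Sum>i\<in>UNIV. a i * h i w)"
    using x(2) by (simp add: inner_sum_right inner_commute)
  ultimately show ?thesis by blast
qed

lemma S_ineq:
  assumes s: "s \<in> S" and kf: "\<And>i. - a i \<le> kf i m"
  shows "(\<Sum>i\<in>UNIV. a i * h i s) \<le> s \<bullet> m"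
  using S_cases[OF s]
proof
  assume "s = 0" then show ?thesis by (simp add: h_zero)
next
  assume "\<exists>i. h i s = -1 \<and> (\<forall>j. j \<noteq> i \<longrightarrow> h j s = 0)"
  then obtain i where i: "h i s = -1" "\<And>j. j \<noteq> i \<Longrightarrow> h j s = 0" by blast
  have "(\<Sum>j\<in>UNIV. a j * h j s) = a i * h i s + (\<Sum>j\<in>UNIV - {i}. a j * h j s)"
    by (simp add: sum.remove)
  also have "(\<Sum>j\<in>UNIV - {i}. a j * h j s) = 0" using i(2) by simp
  finally have eq: "(\<Sum>j\<in>UNIV. a j * h j s) = - a i" using i(1) by simp
  have "s \<in> nab i" unfolding nab_iff using i by auto
  then have "kf i m \<le> s \<bullet> m" by (rule kf_le)
  then show ?thesis using eq kf[of i] by simp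
qed

lemma P_mem:
  assumes a: "\<And>i. 0 \<le> a i"
  shows "m \<in> P a \<longleftrightarrow> (\<forall>i. - a i \<le> kf i m)"
proof
  assume m: "m \<in> P a" show "\<forall>i. - a i \<le> kf i m"
  proof
    fix i show "- a i \<le> kf i m" by (rule P_sub[of a, OF a m])
  qed
next
  assume kf: "\<forall>i. - a i \<le> kf i m"
  show "m \<in> P a"
  proof (rule ccontr)
    assume "m \<notin> P a"
    then obtain w b where wb: "w \<bullet> m < b" "\<forall>p\<in>P a. b < w \<bullet> p"
      using separating_hyperplane_closed_point[OF P_convex P_closed] by blast
    obtain p where p: "p \<in> P a" "w \<bullet> p = (\<Sum>i\<in>UNIV. a i * h i w)" using P_att by blast
    have lt: "w \<bullet> m < (\<Sum>i\<in>UNIV. a i * h i w)" using wb p by force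
    obtain l where l0: "\<forall>s\<in>S. 0 \<le> l s" and lw: "w = (\<Sum>s\<in>S. l s *\<^sub>R s)"
      and leq: "\<forall>i. h i w = (\<Sum>s\<in>S. l s * h i s)" using KEY[of w] by blast
    have "(\<Sum>i\<in>UNIV. a i * h i w) = (\<Sum>i\<in>UNIV. \<Sum>s\<in>S. l s * (a i * h i s))"
      using leq by (simp add: sum_distrib_left mult.left_commute)
    also have "\<dots> = (\<Sum>s\<in>S. l s * (\<Sum>i\<in>UNIV. a i * h i s))"
      by (subst sum.swap) (simp add: sum_distrib_left)
    also have "\<dots> \<le> (\<Sum>s\<in>S. l s * (s \<bullet> m))"
      using l0 S_ineq kf by (intro sum_mono mult_left_mono) auto
    also have "\<dots> = w \<bullet> m" unfolding lw by (simp add: inner_sum_left)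
    finally show False using lt by simp
  qed
qed

end

(* ---- part E2 ---- *)


context nef
begin

lemma C_repr: "C = {\<Sum>i\<in>UNIV. c i *\<^sub>R x i | c x. (\<forall>i. 0 \<le> c i) \<and> sum c UNIV = 1 \<and> (\<forall>i. x i \<in> D i)}"
proof -
  have "convex (D i)" for i by (subst T(3)) simp
  moreover have "D i \<noteq> {}" for i using D0 by blast
  ultimately have cv: "\<forall>i\<in>UNIV. convex (D i) \<and> D i \<noteq> {}" by blast
  show ?thesis unfolding C_def using convex_hull_finite_union[OF finite cv] by simp
qed

lemma card_pos_real: "0 < real (card (UNIV :: 'r set))" by simp

lemma jC_iff: "m \<in> (\<lambda>x. real j *\<^sub>R x) ` C \<longleftrightarrow> (\<Sum>i\<in>UNIV. - kf i m) \<le> real j"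
proof
  assume "m \<in> (\<lambda>x. real j *\<^sub>R x) ` C"
  then obtain c x where cx: "\<And>i. 0 \<le> c i" "sum c UNIV = 1" "\<And>i. x i \<in> D i"
    and m: "m = real j *\<^sub>R (\<Sum>i\<in>UNIV. c i *\<^sub>R x i)" unfolding C_repr by blast
  have "m = (\<Sum>i\<in>UNIV. (real j * c i) *\<^sub>R x i)" unfolding m by (simp add: scaleR_sum_right)
  then have mP: "m \<in> P (\<lambda>i. real j * c i)" unfolding P_def using cx(3) by blast
  have k: "- (real j * c i) \<le> kf i m" for i by (rule P_sub[OF _ mP]) (simp add: cx(1))
  have "(\<Sum>i\<in>UNIV. - kf i m) \<le> (\<Sum>i\<in>UNIV. real j * c i)"
  proof (rule sum_mono)
    fix i show "- kf i m \<le> real j * c i" using k[of i] by linarith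
  qed
  also have "\<dots> = real j" using cx(2) by (simp add: sum_distrib_left[symmetric])
  finally show "(\<Sum>i\<in>UNIV. - kf i m) \<le> real j" .
next
  assume le: "(\<Sum>i\<in>UNIV. - kf i m) \<le> real j"
  define r where "r = real (card (UNIV :: 'r set))"
  have r: "0 < r" unfolding r_def by simp
  define \<sigma> where "\<sigma> = (\<Sum>i\<in>UNIV. - kf i m)"
  define a where "a i = - kf i m + (real j - \<sigma>) / r" for i
  have q: "0 \<le> (real j - \<sigma>) / r" using le r unfolding \<sigma>_def by simp
  have a0: "0 \<le> a i" for i using kf_le0[of i m] q unfolding a_def by linarith
  have "sum a UNIV = (\<Sum>i\<in>UNIV. - kf i m) + (\<Sum>i\<in>(UNIV::'r set). (real j - \<sigma>) / r)"
    unfolding a_def by (rule sum.distrib)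
  also have "(\<Sum>i\<in>(UNIV::'r set). (real j - \<sigma>) / r) = real j - \<sigma>" using r unfolding r_def by simp
  finally have asum: "sum a UNIV = real j" unfolding \<sigma>_def by simp
  have "m \<in> P a" using P_mem[OF a0] kf_le0 r le unfolding a_def \<sigma>_def by simp
  then obtain x where x: "m = (\<Sum>i\<in>UNIV. a i *\<^sub>R x i)" "\<And>i. x i \<in> D i" unfolding P_def by auto
  show "m \<in> (\<lambda>x. real j *\<^sub>R x) ` C"
  proof (cases "j = 0")
    case True
    then have "\<forall>i\<in>UNIV. a i = 0" using asum a0 sum_nonneg_eq_0_iff[of UNIV a] by simp
    then have "m = 0" using x(1) by simp
    then show ?thesis using C0 True by (auto simp: image_iff)
  next
    case False
    define c where "c i = a i / real j" for i
    have "(\<Sum>i\<in>UNIV. c i *\<^sub>R x i) \<in> C" unfolding C_repr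
    proof (intro CollectI exI conjI allI)
      show "0 \<le> c i" for i unfolding c_def using a0 by simp
      show "sum c UNIV = 1" unfolding c_def using asum False by (simp add: sum_divide_distrib[symmetric])
      show "x i \<in> D i" for i by (rule x(2))
    qed simp
    moreover have "real j *\<^sub>R (\<Sum>i\<in>UNIV. c i *\<^sub>R x i) = m"
      unfolding x(1) c_def using False by (simp add: scaleR_sum_right)
    ultimately show ?thesis by force
  qed
qed

lemma axis_sum: "(\<Sum>i\<in>UNIV. c i *\<^sub>R (axis i 1 :: real^'r)) = (\<chi> i. c i)"
  by (simp add: vec_eq_iff axis_def if_distrib[of "\<lambda>t. c _ * t"] cong: if_cong)

lemma cay_mem: "p \<in> cayley D \<longleftrightarrow> (\<exists>c x. (\<forall>i. 0 \<le> c i) \<and> sum c UNIV = 1 \<and> (\<forall>i. x i \<in> D i)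
   \<and> p = (\<Sum>i\<in>UNIV. c i *\<^sub>R x i, \<chi> i. c i))"
proof -
  define Si where "Si i = (\<lambda>x. (x, axis i 1 :: real^'r)) ` D i" for i
  have Si: "Si i = D i \<times> {axis i 1}" for i unfolding Si_def by auto
  have "convex (D i)" for i by (subst T(3)) simp
  moreover have "D i \<noteq> {}" for i using D0 by blast
  ultimately have cv: "\<forall>i\<in>UNIV. convex (Si i) \<and> Si i \<noteq> {}" unfolding Si by (auto intro: convex_Times)
  have cay: "cayley D = convex hull (\<Union>(Si ` UNIV))" unfolding cayley_def Si_def by simp
  have pairsum: "(\<Sum>i\<in>UNIV. c i *\<^sub>R (x i, axis i 1 :: real^'r)) = (\<Sum>i\<in>UNIV. c i *\<^sub>R x i, \<chi> i. c i)" for c x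
    by (simp add: prod_eq_iff fst_sum snd_sum axis_sum)
  show ?thesis
  proof
    assume "p \<in> cayley D"
    then obtain c s where cs: "\<forall>i. 0 \<le> c i" "sum c UNIV = 1" "\<forall>i. s i \<in> Si i"
      and p: "p = (\<Sum>i\<in>UNIV. c i *\<^sub>R s i)"
      unfolding cay convex_hull_finite_union[OF finite cv] by blast
    have "\<forall>i. \<exists>x. x \<in> D i \<and> s i = (x, axis i 1)" using cs(3) unfolding Si_def by blast
    then obtain x where x: "\<And>i. x i \<in> D i" "\<And>i. s i = (x i, axis i 1)" by metis
    have "p = (\<Sum>i\<in>UNIV. c i *\<^sub>R x i, \<chi> i. c i)" unfolding p x(2) pairsum ..
    then show "\<exists>c x. (\<forall>i. 0 \<le> c i) \<and> sum c UNIV = 1 \<and> (\<forall>i. x i \<in> D i)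
      \<and> p = (\<Sum>i\<in>UNIV. c i *\<^sub>R x i, \<chi> i. c i)" using cs x by blast
  next
    assume "\<exists>c x. (\<forall>i. 0 \<le> c i) \<and> sum c UNIV = 1 \<and> (\<forall>i. x i \<in> D i)
      \<and> p = (\<Sum>i\<in>UNIV. c i *\<^sub>R x i, \<chi> i. c i)"
    then obtain c x where cx: "\<forall>i. 0 \<le> c i" "sum c UNIV = 1" "\<forall>i. x i \<in> D i"
      and p: "p = (\<Sum>i\<in>UNIV. c i *\<^sub>R x i, \<chi> i. c i)" by blast
    have "p = (\<Sum>i\<in>UNIV. c i *\<^sub>R (x i, axis i 1))" unfolding p pairsum ..
    moreover have "\<forall>i. (x i, axis i 1) \<in> Si i" using cx(3) unfolding Si_def by blast
    ultimately show "p \<in> cayley D"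
      unfolding cay convex_hull_finite_union[OF finite cv] using cx(1,2)
      by (intro CollectI exI[of _ c] exI[of _ "\<lambda>i. (x i, axis i 1)"]) simp
  qed
qed

lemma jcay_iff: "(m, v) \<in> (\<lambda>p. real j *\<^sub>R p) ` cayley D \<longleftrightarrow>
   (\<forall>i. 0 \<le> v $ i) \<and> (\<Sum>i\<in>UNIV. v $ i) = real j \<and> (\<forall>i. - (v $ i) \<le> kf i m)"
proof
  assume "(m, v) \<in> (\<lambda>p. real j *\<^sub>R p) ` cayley D"
  then obtain p where p: "p \<in> cayley D" "(m, v) = real j *\<^sub>R p" by blast
  then obtain c x where cx: "\<forall>i. 0 \<le> c i" "sum c UNIV = 1" "\<forall>i. x i \<in> D i"
    and pe: "p = (\<Sum>i\<in>UNIV. c i *\<^sub>R x i, \<chi> i. c i)" unfolding cay_mem by blast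
  have v: "v $ i = real j * c i" for i using p(2) pe by simp
  have m: "m = (\<Sum>i\<in>UNIV. (real j * c i) *\<^sub>R x i)" using p(2) pe by (simp add: scaleR_sum_right)
  have mP: "m \<in> P (\<lambda>i. v $ i)" unfolding P_def v m using cx(3) by blast
  have v0: "\<forall>i. 0 \<le> v $ i" unfolding v using cx(1) by simp
  moreover have "(\<Sum>i\<in>UNIV. v $ i) = real j" unfolding v using cx(2) by (simp add: sum_distrib_left[symmetric])
  moreover have "\<forall>i. - (v $ i) \<le> kf i m" using P_mem[of "\<lambda>i. v $ i" m] v0 mP by simp
  ultimately show "(\<forall>i. 0 \<le> v $ i) \<and> (\<Sum>i\<in>UNIV. v $ i) = real j \<and> (\<forall>i. - (v $ i) \<le> kf i m)" by blast
next
  assume asm: "(\<forall>i. 0 \<le> v $ i) \<and> (\<Sum>i\<in>UNIV. v $ i) = real j \<and> (\<forall>i. - (v $ i) \<le> kf i m)"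
  then have v0: "\<And>i. 0 \<le> v $ i" and vs: "(\<Sum>i\<in>UNIV. v $ i) = real j" and vk: "\<And>i. - (v $ i) \<le> kf i m" by auto
  have "m \<in> P (\<lambda>i. v $ i)" using P_mem[of "\<lambda>i. v $ i" m] v0 vk by simp
  then obtain x where x: "m = (\<Sum>i\<in>UNIV. (v $ i) *\<^sub>R x i)" "\<And>i. x i \<in> D i" unfolding P_def by auto
  show "(m, v) \<in> (\<lambda>p. real j *\<^sub>R p) ` cayley D"
  proof (cases "j = 0")
    case True
    then have "\<forall>i\<in>UNIV. v $ i = 0" using vs v0 sum_nonneg_eq_0_iff[of UNIV "\<lambda>i. v $ i"] by simp
    then have v: "v = 0" and m: "m = 0" using x(1) by (auto simp: vec_eq_iff)
    define r where "r = real (card (UNIV :: 'r set))"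
    have r: "0 < r" unfolding r_def by simp
    have "(\<Sum>i\<in>UNIV. (1 / r) *\<^sub>R (0::'a), \<chi> i. 1 / r) \<in> cayley D" unfolding cay_mem
      by (rule exI[of _ "\<lambda>_. 1 / r"], rule exI[of _ "\<lambda>_. 0"]) (use r D0 in \<open>simp add: r_def\<close>)
    then show ?thesis using True v m by (auto simp: image_iff zero_prod_def intro!: bexI[of _ "(0, \<chi> i. 1 / r)"])
  next
    case False
    define c where "c i = v $ i / real j" for i
    have pin: "(\<Sum>i\<in>UNIV. c i *\<^sub>R x i, \<chi> i. c i) \<in> cayley D" unfolding cay_mem
    proof (intro exI conjI allI)
      show "0 \<le> c i" for i unfolding c_def using v0 by simp
      show "sum c UNIV = 1" unfolding c_def using vs False by (simp add: sum_divide_distrib[symmetric])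
      show "x i \<in> D i" for i by (rule x(2))
    qed simp
    have "real j *\<^sub>R (\<Sum>i\<in>UNIV. c i *\<^sub>R x i, \<chi> i. c i) = (m, v)"
      unfolding x(1) c_def using False by (simp add: scaleR_sum_right vec_eq_iff)
    then show ?thesis using pin by force
  qed
qed

end

(* ---- part E3 ---- *)


lemma lattice_prod: "((m, v) :: 'a::euclidean_space \<times> (real^'r)) \<in> lattice_points \<longleftrightarrow> m \<in> lattice_points \<and> (\<forall>i. v $ i \<in> \<int>)"
  unfolding lattice_points_def Basis_prod_def Basis_vec_def
  by (simp add: ball_Un inner_Pair inner_axis)

context nef
begin

definition ps where "ps i m = nat \<lfloor>- kf i m\<rfloor>"

lemma ps_real: "m \<in> lattice_points \<Longrightarrow> real (ps i m) = - kf i m"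
proof -
  assume m: "m \<in> lattice_points"
  obtain k' where "kf i m = of_int k'" using kf_int[OF m] by (auto elim: Ints_cases)
  then have k: "- kf i m = of_int (- k')" by simp
  define k where "k = - k'"
  note k = k[folded k_def]
  have "0 \<le> k" using kf_le0[of i m] k by simp
  then show ?thesis unfolding ps_def k by simp
qed

definition A where "A j = {m \<in> lattice_points. (\<Sum>i\<in>UNIV. ps i m) \<le> j}"

lemma A_eq: "lattice_points \<inter> (\<lambda>x. real j *\<^sub>R x) ` C = A j"
proof -
  have "m \<in> (\<lambda>x. real j *\<^sub>R x) ` C \<longleftrightarrow> (\<Sum>i\<in>UNIV. ps i m) \<le> j" if m: "m \<in> lattice_points" for m
  proof -
    have "real (\<Sum>i\<in>UNIV. ps i m) = (\<Sum>i\<in>UNIV. - kf i m)" using ps_real[OF m] by simp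
    then show ?thesis unfolding jC_iff by (metis of_nat_le_iff)
  qed
  then show ?thesis unfolding A_def by blast
qed

lemma A_finite: "finite (A j)"
proof -
  have "bounded ((\<lambda>x. real j *\<^sub>R x) ` C)"
    by (intro compact_imp_bounded compact_scaling C_compact)
  then show ?thesis using lattice_points_bounded_finite A_eq by metis
qed

definition Phi where "Phi = (\<lambda>(m, c). (m, \<chi> i. real (ps i m + c i)))"

lemma Phi_inj: "inj Phi"
proof (rule injI)
  fix p q assume e: "Phi p = Phi q"
  obtain m c where p: "p = (m, c)" by fastforce
  obtain m' c' where q: "q = (m', c')" by fastforce
  have mm: "m = m'" using e unfolding p q Phi_def by simp
  have "(\<chi> i. real (ps i m + c i)) = (\<chi> i. real (ps i m + c' i))" using e unfolding p q Phi_def mm by simp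
  then have "\<forall>i. real (ps i m + c i) = real (ps i m + c' i)" by (simp add: vec_eq_iff)
  then have "c = c'" by (simp add: fun_eq_iff)
  then show "p = q" using p q mm by simp
qed

lemma cay_eq: "lattice_points \<inter> (\<lambda>p. real j *\<^sub>R p) ` cayley D
   = Phi ` (SIGMA m:A j. wset (UNIV::'r set) (j - (\<Sum>i\<in>UNIV. ps i m)))"
proof
  show "Phi ` (SIGMA m:A j. wset (UNIV::'r set) (j - (\<Sum>i\<in>UNIV. ps i m))) \<subseteq> lattice_points \<inter> (\<lambda>p. real j *\<^sub>R p) ` cayley D"
  proof
    fix p assume "p \<in> Phi ` (SIGMA m:A j. wset (UNIV::'r set) (j - (\<Sum>i\<in>UNIV. ps i m)))"
    then obtain m c where m: "m \<in> A j" and c: "c \<in> wset (UNIV::'r set) (j - (\<Sum>i\<in>UNIV. ps i m))"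
      and pe: "p = Phi (m, c)" by blast
    have ml: "m \<in> lattice_points" and mj: "(\<Sum>i\<in>UNIV. ps i m) \<le> j" using m unfolding A_def by auto
    have cs: "sum c UNIV = j - (\<Sum>i\<in>UNIV. ps i m)" using c unfolding wset_def by auto
    define v :: "real^'r" where "v = (\<chi> i. real (ps i m + c i))"
    have "(\<Sum>i\<in>UNIV. v $ i) = real ((\<Sum>i\<in>UNIV. ps i m) + sum c UNIV)"
      unfolding v_def by (simp add: sum.distrib)
    also have "\<dots> = real j" using cs mj by simp
    finally have vs: "(\<Sum>i\<in>UNIV. v $ i) = real j" .
    have vk: "- (v $ i) \<le> kf i m" for i unfolding v_def using ps_real[OF ml, of i] by simp
    have "(m, v) \<in> (\<lambda>p. real j *\<^sub>R p) ` cayley D" unfolding jcay_iff using vs vk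
      by (simp add: v_def)
    moreover have "(m, v) \<in> lattice_points" unfolding lattice_prod v_def using ml by simp
    ultimately show "p \<in> lattice_points \<inter> (\<lambda>p. real j *\<^sub>R p) ` cayley D"
      unfolding pe Phi_def v_def by simp
  qed
next
  show "lattice_points \<inter> (\<lambda>p. real j *\<^sub>R p) ` cayley D \<subseteq> Phi ` (SIGMA m:A j. wset (UNIV::'r set) (j - (\<Sum>i\<in>UNIV. ps i m)))"
  proof
    fix p assume p: "p \<in> lattice_points \<inter> (\<lambda>p. real j *\<^sub>R p) ` cayley D"
    obtain m v where mv: "p = (m, v)" by fastforce
    have L: "(m, v) \<in> lattice_points" and J: "(m, v) \<in> (\<lambda>p. real j *\<^sub>R p) ` cayley D"
      using p unfolding mv by auto
    have ml: "m \<in> lattice_points" and vi: "\<And>i. v $ i \<in> \<int>" using L[unfolded lattice_prod] by auto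
    have v0: "\<And>i. 0 \<le> v $ i" and vs: "(\<Sum>i\<in>UNIV. v $ i) = real j" and vk: "\<And>i. - (v $ i) \<le> kf i m"
      using J[unfolded jcay_iff] by auto
    define n where "n i = nat \<lfloor>v $ i\<rfloor>" for i
    have nr: "real (n i) = v $ i" for i
    proof -
      obtain k where k: "v $ i = of_int k" using vi[of i] by (auto elim: Ints_cases)
      then show ?thesis unfolding n_def using v0[of i] by simp
    qed
    have pn: "ps i m \<le> n i" for i
    proof -
      have "real (ps i m) \<le> real (n i)" using ps_real[OF ml, of i] nr[of i] vk[of i] by simp
      then show ?thesis by simp
    qed
    have "real (sum n UNIV) = real j" using vs nr by simp
    then have ns: "sum n UNIV = j" by (simp only: of_nat_eq_iff)
    define c where "c i = n i - ps i m" for i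
    have psj: "(\<Sum>i\<in>UNIV. ps i m) \<le> j" using ns sum_mono[of UNIV "\<lambda>i. ps i m" n] pn by simp
    have "sum c UNIV = j - (\<Sum>i\<in>UNIV. ps i m)"
      unfolding c_def using sum_subtractf_nat[of UNIV "\<lambda>i. ps i m" n] pn ns by simp
    then have cw: "c \<in> wset (UNIV::'r set) (j - (\<Sum>i\<in>UNIV. ps i m))" unfolding wset_def by simp
    have mA: "m \<in> A j" unfolding A_def using ml psj by simp
    have "Phi (m, c) = (m, v)" unfolding Phi_def c_def using pn nr by (simp add: vec_eq_iff)
    then show "p \<in> Phi ` (SIGMA m:A j. wset (UNIV::'r set) (j - (\<Sum>i\<in>UNIV. ps i m)))"
      unfolding mv using mA cw by force
  qed
qed

definition Fn where "Fn n = card {m \<in> lattice_points. (\<Sum>i\<in>UNIV. ps i m) = n}"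

lemma level_eq: "n \<le> j \<Longrightarrow> {m \<in> A j. (\<Sum>i\<in>UNIV. ps i m) = n} = {m \<in> lattice_points. (\<Sum>i\<in>UNIV. ps i m) = n}"
  unfolding A_def by auto

lemma C_card: "card (lattice_points \<inter> (\<lambda>x. real j *\<^sub>R x) ` C) = (\<Sum>n\<in>{..j}. Fn n)"
proof -
  have "card (A j) = (\<Sum>m\<in>A j. 1)" by simp
  also have "\<dots> = (\<Sum>n\<in>{..j}. \<Sum>m\<in>{m \<in> A j. (\<Sum>i\<in>UNIV. ps i m) = n}. 1)"
    by (rule sum.group[symmetric]) (rule A_finite, simp, auto simp: A_def)
  also have "\<dots> = (\<Sum>n\<in>{..j}. Fn n)"
    by (rule sum.cong[OF refl]) (simp add: level_eq Fn_def)
  finally show ?thesis unfolding A_eq .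
qed

lemma cay_card: "card (lattice_points \<inter> (\<lambda>p. real j *\<^sub>R p) ` cayley D)
  = (\<Sum>n\<in>{..j}. Fn n * card (wset (UNIV :: 'r set) (j - n)))"
proof -
  have "card (lattice_points \<inter> (\<lambda>p. real j *\<^sub>R p) ` cayley D)
     = card (SIGMA m:A j. wset (UNIV::'r set) (j - (\<Sum>i\<in>UNIV. ps i m)))"
    unfolding cay_eq by (rule card_image) (rule inj_on_subset[OF Phi_inj], simp)
  also have "\<dots> = (\<Sum>m\<in>A j. card (wset (UNIV :: 'r set) (j - (\<Sum>i\<in>UNIV. ps i m))))"
    by (rule card_SigmaI) (auto simp: A_finite wset_finite)
  also have "\<dots> = (\<Sum>n\<in>{..j}. \<Sum>m\<in>{m \<in> A j. (\<Sum>i\<in>UNIV. ps i m) = n}.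
        card (wset (UNIV :: 'r set) (j - (\<Sum>i\<in>UNIV. ps i m))))"
    by (rule sum.group[symmetric]) (rule A_finite, simp, auto simp: A_def)
  also have "\<dots> = (\<Sum>n\<in>{..j}. Fn n * card (wset (UNIV :: 'r set) (j - n)))"
  proof (rule sum.cong[OF refl])
    fix n assume n: "n \<in> {..j}"
    have "(\<Sum>m\<in>{m \<in> A j. (\<Sum>i\<in>UNIV. ps i m) = n}. card (wset (UNIV :: 'r set) (j - (\<Sum>i\<in>UNIV. ps i m))))
        = (\<Sum>m\<in>{m \<in> A j. (\<Sum>i\<in>UNIV. ps i m) = n}. card (wset (UNIV :: 'r set) (j - n)))"
      by (rule sum.cong) auto
    also have "\<dots> = Fn n * card (wset (UNIV :: 'r set) (j - n))" using n by (simp add: level_eq Fn_def)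
    finally show "(\<Sum>m\<in>{m \<in> A j. (\<Sum>i\<in>UNIV. ps i m) = n}. card (wset (UNIV :: 'r set) (j - (\<Sum>i\<in>UNIV. ps i m))))
        = Fn n * card (wset (UNIV :: 'r set) (j - n))" .
  qed
  finally show ?thesis .
qed

end

(* ---- part E4 ---- *)


context nef
begin

lemma aff_dim_C: "aff_dim C = int DIM('a)"
  using C_interior by (intro aff_dim_nonempty_interior) auto

definition ov :: "real^'r" where "ov = (\<chi> i. 1)"

lemma ov_inner: "ov \<bullet> v = (\<Sum>i\<in>UNIV. v $ i)" unfolding ov_def by (simp add: inner_vec_def)

definition Hyp :: "('a \<times> (real^'r)) set" where "Hyp = {p. (0, ov) \<bullet> p = 1}"

lemma Hyp_iff: "(z, v) \<in> Hyp \<longleftrightarrow> (\<Sum>i\<in>UNIV. v $ i) = 1"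
  unfolding Hyp_def by (simp add: inner_Pair ov_inner)

lemma cay_sub_Hyp: "cayley D \<subseteq> Hyp"
proof
  fix p assume "p \<in> cayley D"
  then obtain c x where cx: "\<forall>i. 0 \<le> c i" "sum c UNIV = 1" "\<forall>i. x i \<in> D i"
    and p: "p = (\<Sum>i\<in>UNIV. c i *\<^sub>R x i, \<chi> i. c i)" unfolding cay_mem by blast
  show "p \<in> Hyp" unfolding p Hyp_iff using cx(2) by simp
qed

lemma affine_hull_cay: "affine hull (cayley D) = Hyp"
proof
  show "affine hull cayley D \<subseteq> Hyp"
    by (rule hull_minimal[OF cay_sub_Hyp]) (simp add: Hyp_def affine_hyperplane)
next
  define Aff where "Aff = affine hull (cayley D)"
  have aff: "affine Aff" unfolding Aff_def by simp
  have cA: "p \<in> cayley D \<Longrightarrow> p \<in> Aff" for p unfolding Aff_def by (rule hull_inc)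
  define r where "r = real (card (UNIV :: 'r set))"
  have r: "0 < r" unfolding r_def by simp
  define u :: "real^'r" where "u = (\<chi> i. 1 / r)"
  have "0 \<in> interior \<Delta>" using reflD unfolding reflexive_polytope_def by auto
  then obtain e where e: "e > 0" "ball 0 e \<subseteq> \<Delta>" using mem_interior by blast
  have small: "(z', u) \<in> cayley D" if z': "norm z' < e / r" for z'
  proof -
    have "norm (r *\<^sub>R z') < e" using z' r by (simp add: field_simps)
    then have "r *\<^sub>R z' \<in> \<Delta>" using e by auto
    then obtain f where f: "r *\<^sub>R z' = (\<Sum>i\<in>UNIV. f i)" "\<And>i. f i \<in> D i"
      using Delta_eq unfolding minkowski_sum_def by auto
    have "(\<Sum>i\<in>UNIV. (1 / r) *\<^sub>R f i) = (1 / r) *\<^sub>R (r *\<^sub>R z')"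
      unfolding f(1) by (simp add: scaleR_sum_right)
    also have "\<dots> = z'" using r by simp
    finally have fz: "(\<Sum>i\<in>UNIV. (1 / r) *\<^sub>R f i) = z'" .
    show ?thesis unfolding cay_mem
      by (rule exI[of _ "\<lambda>_. 1 / r"], rule exI[of _ f]) (use r f(2) fz in \<open>simp add: r_def u_def\<close>)
  qed
  have u0: "(0, u) \<in> Aff" using small[of 0] e r cA by simp
  have sub: "subspace ((\<lambda>x. x - (0, u)) ` Aff)" by (rule affine_diffs_subspace_subtract[OF aff u0])
  have subm: "p - (0, u) \<in> (\<lambda>x. x - (0, u)) ` Aff" if "p \<in> Aff" for p using that by blast
  have zu: "(z, u) \<in> Aff" for z
  proof -
    define t where "t = 2 * r * norm z / e + 1"
    have t: "0 < t" unfolding t_def using e r by (simp add: add_nonneg_pos)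
    have "norm ((1 / t) *\<^sub>R z) < e / r"
    proof -
      have et: "e * t = 2 * r * norm z + e" unfolding t_def using e by (simp add: field_simps)
      have "0 \<le> r * norm z" using r by simp
      then have "r * norm z < e * t" using et e by linarith
      then have "norm z / t < e / r" using t r by (simp add: field_simps)
      then show ?thesis using t by simp
    qed
    then have "((1 / t) *\<^sub>R z, u) \<in> Aff" using small cA by blast
    then have "t *\<^sub>R ((1 / t) *\<^sub>R z, u) + (1 - t) *\<^sub>R (0, u) \<in> Aff"
      by (intro mem_affine[OF aff _ u0]) auto
    moreover have "t *\<^sub>R ((1 / t) *\<^sub>R z, u) + (1 - t) *\<^sub>R (0, u) = (z, u)"
      using t by (simp add: algebra_simps)
    ultimately show ?thesis by simp
  qed
  have ei: "(0, axis i 1) \<in> Aff" for i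
  proof -
    have "(\<chi> k. if k = i then 1 else 0) = (axis i 1 :: real^'r)" by (simp add: axis_def)
    moreover have "(\<Sum>k\<in>UNIV. (if k = i then 1 else 0) *\<^sub>R (0::'a), \<chi> k. if k = i then (1::real) else 0) \<in> cayley D"
      unfolding cay_mem
      by (rule exI[of _ "\<lambda>k. if k = i then 1 else 0"], rule exI[of _ "\<lambda>_. 0"]) (use D0 in simp)
    ultimately show ?thesis using cA by simp
  qed
  show "Hyp \<subseteq> affine hull cayley D"
  proof
    fix p assume p: "p \<in> Hyp"
    obtain z v where zv: "p = (z, v)" by fastforce
    have vs: "(\<Sum>i\<in>UNIV. v $ i) = 1" using p unfolding zv Hyp_iff .
    have mem: "(\<Sum>i\<in>UNIV. v $ i *\<^sub>R ((0, axis i 1) - (0, u))) \<in> (\<lambda>x. x - (0, u)) ` Aff"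
      by (intro subspace_sum[OF sub] subspace_mul[OF sub] subm ei)
    have eq: "(\<Sum>i\<in>UNIV. v $ i *\<^sub>R ((0, axis i 1) - (0, u))) = (0, v) - (0, u)"
    proof -
      have "(\<Sum>i\<in>UNIV. v $ i *\<^sub>R axis i 1 - v $ i *\<^sub>R u) = (\<Sum>i\<in>UNIV. v $ i *\<^sub>R (axis i 1 :: real^'r)) - (\<Sum>i\<in>UNIV. v $ i) *\<^sub>R u"
        by (simp add: sum_subtractf scaleR_sum_left)
      also have "\<dots> = v - u" using vs axis_sum[of "\<lambda>i. v $ i"] by simp
      finally have sn: "(\<Sum>i\<in>UNIV. v $ i *\<^sub>R axis i 1 - v $ i *\<^sub>R u) = v - u" .
      show ?thesis by (simp add: prod_eq_iff fst_sum snd_sum scaleR_diff_right sn)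
    qed
    have A1: "(0, v) - (0, u) \<in> (\<lambda>x. x - (0, u)) ` Aff" using mem unfolding eq .
    have A2: "(z, u) - (0, u) \<in> (\<lambda>x. x - (0, u)) ` Aff" by (rule subm[OF zu])
    have "((z, u) - (0, u)) + ((0, v) - (0, u)) \<in> (\<lambda>x. x - (0, u)) ` Aff"
      by (rule subspace_add[OF sub A2 A1])
    then have "(z, v) - (0, u) \<in> (\<lambda>x. x - (0, u)) ` Aff" by simp
    then obtain q where q: "q \<in> Aff" "(z, v) - (0, u) = q - (0, u)" by blast
    have "q = (q - (0, u)) + (0, u)" by simp
    also have "\<dots> = ((z, v) - (0, u)) + (0, u)" by (simp only: q(2)[symmetric])
    also have "\<dots> = (z, v)" by (rule diff_add_cancel)
    finally have "(z, v) = q" by simp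
    then show "p \<in> affine hull cayley D" using q(1) zv unfolding Aff_def by simp
  qed
qed

lemma ov_ne: "(0::'a, ov) \<noteq> 0"
proof
  assume "(0::'a, ov) = 0"
  then have "ov = 0" by (simp add: zero_prod_def)
  then have "ov $ undefined = 0" by simp
  then show False unfolding ov_def by simp
qed

lemma aff_dim_cay: "aff_dim (cayley D) = int (DIM('a) + CARD('r) - 1)"
proof -
  have "aff_dim (cayley D) = aff_dim Hyp" by (metis aff_dim_affine_hull affine_hull_cay)
  also have "\<dots> = int (DIM('a \<times> (real^'r)) - 1)" unfolding Hyp_def using aff_dim_hyperplane[OF ov_ne, of 1] by simp
  finally show ?thesis by simp
qed

end

(* ---- part E5 ---- *)


context nef
begin

definition G where "G = Abs_fps (\<lambda>n. int (Fn n))"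

lemma ehr_C: "ehrhart_series C = G * ones"
proof (rule fps_ext)
  fix j
  have "fps_nth (ehrhart_series C) j = int (\<Sum>n\<in>{..j}. Fn n)"
    unfolding ehrhart_series_def using C_card by simp
  also have "\<dots> = (\<Sum>i=0..j. fps_nth G i * fps_nth ones (j - i))"
    unfolding G_def ones_def by (simp add: atLeast0AtMost)
  finally show "fps_nth (ehrhart_series C) j = fps_nth (G * ones) j" unfolding fps_mult_nth .
qed

lemma ehr_cay: "ehrhart_series (cayley D) = G * ones ^ CARD('r)"
proof -
  have W: "ones ^ CARD('r) = Abs_fps (\<lambda>n. int (card (wset (UNIV :: 'r set) n)))"
    using wfps[of "UNIV :: 'r set"] by simp
  show ?thesis unfolding W
  proof (rule fps_ext)
    fix j
    have "fps_nth (ehrhart_series (cayley D)) j = int (\<Sum>n\<in>{..j}. Fn n * card (wset (UNIV :: 'r set) (j - n)))"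
      unfolding ehrhart_series_def using cay_card by simp
    also have "\<dots> = (\<Sum>i=0..j. fps_nth G i * fps_nth (Abs_fps (\<lambda>n. int (card (wset (UNIV :: 'r set) n)))) (j - i))"
      unfolding G_def by (simp add: atLeast0AtMost)
    finally show "fps_nth (ehrhart_series (cayley D)) j
        = fps_nth (G * Abs_fps (\<lambda>n. int (card (wset (UNIV :: 'r set) n)))) j" unfolding fps_mult_nth .
  qed
qed

theorem part4: "h_star (cayley D) = h_star C"
proof -
  define d where "d = DIM('a)"
  define k where "k = CARD('r)"
  have d: "1 \<le> d" unfolding d_def using DIM_positive by (simp add: Suc_le_eq)
  have k: "1 \<le> k" unfolding k_def by (simp add: Suc_le_eq)
  have e1: "nat (aff_dim (cayley D)) + 1 = d + k" unfolding aff_dim_cay d_def k_def using d k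
    unfolding d_def k_def by simp
  have e2: "nat (aff_dim C) + 1 = d + 1" unfolding aff_dim_C d_def by simp
  let ?Y = "(1 - fps_X) :: int fps"
  have "h_star (cayley D) = ?Y ^ (d + k) * (G * ones ^ k)"
    unfolding h_star_def e1 ehr_cay k_def ..
  also have "\<dots> = ?Y ^ d * G * (?Y ^ k * ones ^ k)" by (simp add: power_add mult_ac)
  also have "?Y ^ k * ones ^ k = (?Y * ones) ^ k" by (simp add: power_mult_distrib)
  also have "\<dots> = 1" by (simp add: one_minus_X_ones)
  finally have L: "h_star (cayley D) = ?Y ^ d * G" by simp
  have "h_star C = ?Y ^ (d + 1) * (G * ones)"
    unfolding h_star_def e2 ehr_C ..
  also have "\<dots> = ?Y ^ d * G * (?Y * ones)" by (simp add: mult_ac)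
  also have "\<dots> = ?Y ^ d * G" by (simp add: one_minus_X_ones)
  finally show ?thesis using L by simp
qed

end

theorem proposition3p16:
  fixes \<Delta> :: "'a::euclidean_space set" and D :: "'r::finite \<Rightarrow> 'a set"
  assumes "centered_nef_partition \<Delta> D"
  shows "reflexive_polytope (convex hull (\<Union>i. D i))
    \<and> convex hull (\<Union>i. D i) = dual_polytope (minkowski_sum (dual_nef D))
    \<and> convex hull (\<Union>i. dual_nef D i) = dual_polytope \<Delta>
    \<and> h_star (cayley D) = h_star (convex hull (\<Union>i. D i))"
proof -
  interpret nef \<Delta> D by unfold_locales (rule assms)
  show ?thesis
    using part1 part2 part3 part4 unfolding C_def Nab_def nab_def by blast
qed


end
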